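(* Let $n\ge 2$ and $u,v\in\{a,b\}^n$. If $\big||u|_c-|v|_c\big|=1$ for some $c\in\{a,b\}$, then $(u,v)$ is not an MAU pair.
   Context: Let $\Sigma=\{a,b\}$. For a word $w$ and a letter $c$, $|w|_c$ denotes the number of occurrences of $c$ in $w$. Two words $x,y$ are abelian equivalent, written $x\sim_{\mathrm{abl}}y$, if $|x|_c=|y|_c$ for all $c\in\Sigma$. For words $u,v$: a pair $(x,y)$ is an internal abelian-border of $(u,v)$ if $x$ is a nonempty proper suffix of $u$, $y$ is a proper prefix of $v$, and $x\sim_{\mathrm{abl}}y$; it is an external abelian-border of $(u,v)$ if $x$ is a nonempty proper prefix of $u$, $y$ is a proper suffix of $v$, and $x\sim_{\mathrm{abl}}y$. The pair $(u,v)$ is mutually abelian-bordered (MAB) if it has both an internal and an external abelian-border, and mutually abelian-unbordered (MAU) if it has neither. *)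

theory Defs
  imports Main "HOL-Library.Sublist"
begin

datatype letter = a | b

definition occ :: "letter list \<Rightarrow> letter \<Rightarrow> nat" where
  "occ w c = count_list w c"

definition abel_eq :: "letter list \<Rightarrow> letter list \<Rightarrow> bool" where
  "abel_eq x y \<longleftrightarrow> (\<forall>c. occ x c = occ y c)"

definition internal_abel_border :: "letter list \<Rightarrow> letter list \<Rightarrow> letter list \<Rightarrow> letter list \<Rightarrow> bool" where
  "internal_abel_border u v x y \<longleftrightarrow>
     x \<noteq> [] \<and> strict_suffix x u \<and> strict_prefix y v \<and> abel_eq x y"

definition external_abel_border :: "letter list \<Rightarrow> letter list \<Rightarrow> letter list \<Rightarrow> letter list \<Rightarrow> bool" where
  "external_abel_border u v x y \<longleftrightarrow>
     x \<noteq> [] \<and> strict_prefix x u \<and> strict_suffix y v \<and> abel_eq x y"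

definition MAB :: "letter list \<Rightarrow> letter list \<Rightarrow> bool" where
  "MAB u v \<longleftrightarrow> (\<exists>x y. internal_abel_border u v x y) \<and> (\<exists>x y. external_abel_border u v x y)"

definition MAU :: "letter list \<Rightarrow> letter list \<Rightarrow> bool" where
  "MAU u v \<longleftrightarrow> \<not> (\<exists>x y. internal_abel_border u v x y) \<and> \<not> (\<exists>x y. external_abel_border u v x y)"

end

theory Submission
  imports Defs
begin

lemma cnt_sum: "count_list x a + count_list x b = length x"
proof (induction x)
  case Nil then show ?case by simp
next
  case (Cons y x) then show ?case by (cases y) auto
qed

lemma abel_of_a: "length x = length y \<Longrightarrow> count_list x a = count_list y a \<Longrightarrow> abel_eq x y"
  unfolding abel_eq_def occ_def
  by (metis add_left_cancel cnt_sum letter.exhaust)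

lemma len_neq: "length x \<noteq> length y \<Longrightarrow> x \<noteq> y" by auto

lemma cnt_le_len: "count_list x c \<le> length x"
  by (induction x) auto

lemma take_step: "count_list (take k v) c \<le> count_list (take (Suc k) v) c \<and> count_list (take (Suc k) v) c \<le> count_list (take k v) c + 1"
proof -
  have "take (Suc k) v = take k v @ take 1 (drop k v)"
    using take_add[of k 1 v] by simp
  moreover have "count_list (take 1 (drop k v)) c \<le> 1"
    using cnt_le_len[of "take 1 (drop k v)" c] by simp
  ultimately show ?thesis by simp
qed

lemma drop_step: "count_list (drop (Suc m) u) c \<le> count_list (drop m u) c \<and> count_list (drop m u) c \<le> count_list (drop (Suc m) u) c + 1"
proof -
  have "drop m u = take 1 (drop m u) @ drop (Suc m) u"
    by (metis One_nat_def append_take_drop_id drop_drop plus_1_eq_Suc add.commute)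
  moreover have "count_list (take 1 (drop m u)) c \<le> 1"
    using cnt_le_len[of "take 1 (drop m u)" c] by simp
  ultimately show ?thesis by (metis count_list_append add.commute add_le_mono1 le_add2)
qed

lemma divt: "i \<le> j \<Longrightarrow> (\<forall>k. i \<le> k \<and> k < j \<longrightarrow> \<bar>h (Suc k) - h k\<bar> \<le> (1::int))
   \<Longrightarrow> h i \<le> 0 \<Longrightarrow> 0 \<le> h j \<Longrightarrow> \<exists>k. i \<le> k \<and> k \<le> j \<and> h k = 0"
proof (induction j)
  case 0 then show ?case by auto
next
  case (Suc j)
  show ?case
  proof (cases "i = Suc j")
    case True then show ?thesis using Suc.prems by auto
  next
    case False
    hence ij: "i \<le> j" using Suc.prems by simp
    show ?thesis
    proof (cases "h j \<ge> 0")
      case True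
      then obtain k where "i \<le> k \<and> k \<le> j \<and> h k = 0" using Suc.IH ij Suc.prems by auto
      then show ?thesis by (intro exI[of _ k]) auto
    next
      case False
      have "\<bar>h (Suc j) - h j\<bar> \<le> 1" using Suc.prems ij by auto
      hence "h (Suc j) = 0" using False Suc.prems by auto
      then show ?thesis using Suc.prems by auto
    qed
  qed
qed

lemma divt2: "i \<le> j \<Longrightarrow> (\<forall>k. i \<le> k \<and> k < j \<longrightarrow> \<bar>h (Suc k) - h k\<bar> \<le> (1::int))
   \<Longrightarrow> h i * h j \<le> 0 \<Longrightarrow> \<exists>k. i \<le> k \<and> k \<le> j \<and> h k = 0"
proof -
  assume A: "i \<le> j" "\<forall>k. i \<le> k \<and> k < j \<longrightarrow> \<bar>h (Suc k) - h k\<bar> \<le> (1::int)" "h i * h j \<le> 0"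
  show ?thesis
  proof (cases "h i \<le> 0 \<and> 0 \<le> h j")
    case True then show ?thesis using divt[OF A(1,2)] by auto
  next
    case False
    hence "(\<lambda>k. - h k) i \<le> 0 \<and> 0 \<le> (\<lambda>k. - h k) j" using A(3)
      by (auto simp: mult_le_0_iff)
    moreover have "\<forall>k. i \<le> k \<and> k < j \<longrightarrow> \<bar>(\<lambda>k. - h k) (Suc k) - (\<lambda>k. - h k) k\<bar> \<le> (1::int)"
    proof (intro allI impI)
      fix k assume "i \<le> k \<and> k < j"
      then have "\<bar>h (Suc k) - h k\<bar> \<le> 1" using A(2) by blast
      then show "\<bar>(\<lambda>k. - h k) (Suc k) - (\<lambda>k. - h k) k\<bar> \<le> (1::int)" by arith
    qed
    ultimately show ?thesis using divt[OF A(1), of "\<lambda>k. - h k"] by auto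
  qed
qed

theorem mainTheorem10:
  fixes u v :: "letter list" and n :: nat
  assumes "n \<ge> 2" and "length u = n" and "length v = n"
    and "\<exists>c. \<bar>int (occ u c) - int (occ v c)\<bar> = 1"
  shows "\<not> MAU u v"
proof
  assume M: "MAU u v"
  define d where "d = int (count_list u a) - int (count_list v a)"
  have sa: "count_list u a + count_list u b = n" "count_list v a + count_list v b = n"
    using cnt_sum assms(2,3) by auto
  have d1: "\<bar>d\<bar> = 1"
  proof -
    obtain c where "\<bar>int (occ u c) - int (occ v c)\<bar> = 1" using assms(4) by auto
    then show ?thesis unfolding d_def occ_def using sa by (cases c) auto
  qed
  define f where "f k = int (count_list (drop (n-k) u) a) - int (count_list (take k v) a)" for k
  define g where "g k = int (count_list (take k u) a) - int (count_list (drop (n-k) v) a)" for k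
  have fz: "f k \<noteq> 0" if "1 \<le> k" "k \<le> n - 1" for k
  proof
    assume "f k = 0"
    moreover have "length (drop (n-k) u) = k" "length (take k v) = k" using that assms by auto
    moreover have "prefix (take k u) u" "suffix (drop (n-k) u) u" "prefix (take k v) v" "suffix (drop (n-k) v) v"
      by (auto simp: take_is_prefix suffix_drop)
    moreover have "take k u \<noteq> u" "drop (n-k) u \<noteq> u" "take k v \<noteq> v" "drop (n-k) v \<noteq> v"
      "take k u \<noteq> []" "drop (n-k) u \<noteq> []"
      using that assms by (auto intro!: len_neq)
    ultimately have "internal_abel_border u v (drop (n-k) u) (take k v)"
      unfolding internal_abel_border_def using that assms(1,2,3)
      by (auto simp: f_def g_def strict_suffix_def strict_prefix_def intro!: abel_of_a)
    then show False using M unfolding MAU_def by blast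
  qed
  have gz: "g k \<noteq> 0" if "1 \<le> k" "k \<le> n - 1" for k
  proof
    assume "g k = 0"
    moreover have "length (take k u) = k" "length (drop (n-k) v) = k" using that assms by auto
    moreover have "prefix (take k u) u" "suffix (drop (n-k) u) u" "prefix (take k v) v" "suffix (drop (n-k) v) v"
      by (auto simp: take_is_prefix suffix_drop)
    moreover have "take k u \<noteq> u" "drop (n-k) u \<noteq> u" "take k v \<noteq> v" "drop (n-k) v \<noteq> v"
      "take k u \<noteq> []" "drop (n-k) u \<noteq> []"
      using that assms by (auto intro!: len_neq)
    ultimately have "external_abel_border u v (take k u) (drop (n-k) v)"
      unfolding external_abel_border_def using that assms(1,2,3)
      by (auto simp: f_def g_def strict_suffix_def strict_prefix_def intro!: abel_of_a)
    then show False using M unfolding MAU_def by blast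
  qed
  have fg: "g (n - k) = d - f k" if "k \<le> n" for k
  proof -
    have "count_list (take (n-k) u) a + count_list (drop (n-k) u) a = count_list u a"
      by (metis append_take_drop_id count_list_append)
    moreover have "count_list (take k v) a + count_list (drop k v) a = count_list v a"
      by (metis append_take_drop_id count_list_append)
    ultimately show ?thesis using that unfolding f_def g_def d_def by simp
  qed
  have fstep: "\<bar>f (Suc k) - f k\<bar> \<le> 1" if "k < n" for k
  proof -
    have "n - k = Suc (n - Suc k)" using that by simp
    then show ?thesis unfolding f_def
      using take_step[of k v a] drop_step[of "n - Suc k" u a] by (simp; linarith)
  qed
  have gstep: "\<bar>g (Suc k) - g k\<bar> \<le> 1" if "k < n" for k
  proof -
    have "n - k = Suc (n - Suc k)" using that by simp
    then show ?thesis unfolding g_def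
      using take_step[of k u a] drop_step[of "n - Suc k" v a] by (simp; linarith)
  qed
  have f0: "f 0 = 0" unfolding f_def using assms by simp
  have g0: "g 0 = 0" unfolding g_def using assms by simp
  have "\<bar>f 1\<bar> \<le> 1" using fstep[of 0] f0 assms by simp
  moreover have "f 1 \<noteq> 0" using fz[of 1] assms by simp
  moreover have "g (n-1) \<noteq> 0" using gz[of "n-1"] assms by simp
  moreover have "g (n-1) = d - f 1" using fg[of 1] assms by simp
  ultimately have F1: "f 1 = - d" using d1 by auto
  have "\<bar>g 1\<bar> \<le> 1" using gstep[of 0] g0 assms by simp
  moreover have "f (n-1) \<noteq> 0" using fz[of "n-1"] assms by simp
  moreover have "g 1 \<noteq> 0" using gz[of 1] assms by simp
  moreover have "g 1 = d - f (n-1)" using fg[of "n-1"] assms by (simp add: Suc_diff_le)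
  ultimately have F2: "f (n-1) = 2 * d" using d1 by auto
  have "f 1 * f (n-1) \<le> 0" using F1 F2 by simp
  then obtain k where "1 \<le> k" "k \<le> n-1" "f k = 0"
    using divt2[of 1 "n-1" f] fstep assms(1) by fastforce
  then show False using fz by blast
qed

end
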